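(* For every two integers $a,b$ with $2\le a\le b$, there exists a finite, simple, connected graph $G$ of order $b$ with $\dim_{wt}(G)=a$.
   Context: $d(x,y)$ is the shortest-path distance. A set $W\subseteq V(G)$ is a resolving set if for every two distinct vertices $y,z$ there is $x\in W$ with $d(y,x)\ne d(z,x)$. A set $W$ is a weak total resolving set (WTR-set) if $W$ is resolving and, for every $w\in W$ and every $x\in V(G)\setminus W$, there is $w'\in W\setminus\{w\}$ with $d(x,w')\ne d(w,w')$. $\dim_{wt}(G)$ is the minimum cardinality of a WTR-set. *)

theory Defs
  imports Main
begin

definition simple_graph :: "'a set \<Rightarrow> ('a \<Rightarrow> 'a \<Rightarrow> bool) \<Rightarrow> bool" where
  "simple_graph V E \<longleftrightarrow> finite V \<and>
     (\<forall>x y. E x y \<longrightarrow> x \<in> V \<and> y \<in> V) \<and>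
     (\<forall>x y. E x y \<longrightarrow> E y x) \<and> (\<forall>x. \<not> E x x)"

definition walk :: "'a set \<Rightarrow> ('a \<Rightarrow> 'a \<Rightarrow> bool) \<Rightarrow> 'a list \<Rightarrow> bool" where
  "walk V E xs \<longleftrightarrow> xs \<noteq> [] \<and> set xs \<subseteq> V \<and>
     (\<forall>i. Suc i < length xs \<longrightarrow> E (xs ! i) (xs ! Suc i))"

definition connected_graph :: "'a set \<Rightarrow> ('a \<Rightarrow> 'a \<Rightarrow> bool) \<Rightarrow> bool" where
  "connected_graph V E \<longleftrightarrow> V \<noteq> {} \<and>
     (\<forall>x\<in>V. \<forall>y\<in>V. \<exists>xs. walk V E xs \<and> hd xs = x \<and> last xs = y)"

definition gdist :: "'a set \<Rightarrow> ('a \<Rightarrow> 'a \<Rightarrow> bool) \<Rightarrow> 'a \<Rightarrow> 'a \<Rightarrow> nat" where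
  "gdist V E x y = (LEAST n. \<exists>xs. walk V E xs \<and> hd xs = x \<and> last xs = y \<and> length xs = Suc n)"

definition resolving_set :: "'a set \<Rightarrow> ('a \<Rightarrow> 'a \<Rightarrow> bool) \<Rightarrow> 'a set \<Rightarrow> bool" where
  "resolving_set V E W \<longleftrightarrow> W \<subseteq> V \<and>
     (\<forall>y\<in>V. \<forall>z\<in>V. y \<noteq> z \<longrightarrow> (\<exists>x\<in>W. gdist V E y x \<noteq> gdist V E z x))"

definition wtr_set :: "'a set \<Rightarrow> ('a \<Rightarrow> 'a \<Rightarrow> bool) \<Rightarrow> 'a set \<Rightarrow> bool" where
  "wtr_set V E W \<longleftrightarrow> resolving_set V E W \<and>
     (\<forall>w\<in>W. \<forall>x\<in>V - W. \<exists>w'\<in>W - {w}. gdist V E x w' \<noteq> gdist V E w w')"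

definition dim_wt :: "'a set \<Rightarrow> ('a \<Rightarrow> 'a \<Rightarrow> bool) \<Rightarrow> nat" where
  "dim_wt V E = (LEAST k. \<exists>W. wtr_set V E W \<and> card W = k)"

end

theory Submission imports Defs begin



lemma walk_single: "x \<in> V \<Longrightarrow> walk V E [x]"
  by (simp add: walk_def)

lemma walk_Cons2: "walk V E (x#y#ys) \<longleftrightarrow> x \<in> V \<and> E x y \<and> walk V E (y#ys)"
proof
  assume "walk V E (x#y#ys)"
  then show "x \<in> V \<and> E x y \<and> walk V E (y#ys)"
  proof -
    assume A: "walk V E (x#y#ys)"
    have "E x y" using A unfolding walk_def by (metis Suc_less_eq length_Cons nth_Cons_0 nth_Cons_Suc zero_less_Suc)
    moreover have "walk V E (y#ys)" unfolding walk_def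
    proof (intro conjI allI impI)
      fix i assume "Suc i < length (y#ys)"
      then show "E ((y#ys) ! i) ((y#ys) ! Suc i)" using A unfolding walk_def
        by (metis Suc_less_eq length_Cons nth_Cons_Suc)
    qed (use A in \<open>auto simp: walk_def\<close>)
    ultimately show ?thesis using A by (simp add: walk_def)
  qed
next
  assume A: "x \<in> V \<and> E x y \<and> walk V E (y#ys)"
  show "walk V E (x#y#ys)" unfolding walk_def
  proof (intro conjI allI impI)
    fix i assume "Suc i < length (x#y#ys)"
    then show "E ((x#y#ys) ! i) ((x#y#ys) ! Suc i)"
      using A unfolding walk_def by (cases i) auto
  qed (use A in \<open>auto simp: walk_def\<close>)
qed

lemma gdist_eqI:
  assumes EV: "\<And>x y. E x y \<Longrightarrow> x \<in> V \<and> y \<in> V"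
    and f0: "\<And>y. y \<in> V \<Longrightarrow> f y y = (0::nat)"
    and f1: "\<And>x x' y. E x x' \<Longrightarrow> y \<in> V \<Longrightarrow> f x y \<le> f x' y + 1"
    and f2: "\<And>x y. x \<in> V \<Longrightarrow> y \<in> V \<Longrightarrow> x \<noteq> y \<Longrightarrow> \<exists>x'. E x x' \<and> f x' y + 1 = f x y"
    and xV: "x \<in> V" and yV: "y \<in> V"
  shows "gdist V E x y = f x y"
proof -
  have ex: "\<forall>x\<in>V. f x y = n \<longrightarrow> (\<exists>xs. walk V E xs \<and> hd xs = x \<and> last xs = y \<and> length xs = Suc n)" for n
  proof (induction n)
    case 0
    show ?case
    proof (intro ballI impI)
      fix x assume x: "x \<in> V" "f x y = 0"
      have "x = y" using f2[OF x(1) yV] x(2) by fastforce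
      then show "\<exists>xs. walk V E xs \<and> hd xs = x \<and> last xs = y \<and> length xs = Suc 0"
        by (intro exI[of _ "[x]"]) (use x \<open>x = y\<close> in \<open>simp add: walk_single\<close>)
    qed
  next
    case (Suc n)
    show ?case
    proof (intro ballI impI)
      fix x assume x: "x \<in> V" "f x y = Suc n"
      have "x \<noteq> y" using x f0[OF yV] by auto
      then obtain x' where x': "E x x'" "f x' y + 1 = f x y" using f2[OF x(1) yV] by blast
      have x'V: "x' \<in> V" using EV[OF x'(1)] by simp
      obtain xs where xs: "walk V E xs" "hd xs = x'" "last xs = y" "length xs = Suc n"
        using Suc.IH x'V x'(2) x(2) by auto
      have xse: "xs = x' # tl xs" using xs(2,4) by (cases xs) auto
      have "walk V E (x # xs)" using xs(1) xse x'(1) x(1) walk_Cons2[of V E x x' "tl xs"] by simp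
      then show "\<exists>xs. walk V E xs \<and> hd xs = x \<and> last xs = y \<and> length xs = Suc (Suc n)"
        using xs xse by (intro exI[of _ "x # xs"]) auto
    qed
  qed
  have lb: "walk V E xs \<Longrightarrow> last xs = y \<Longrightarrow> f (hd xs) y \<le> length xs - 1" for xs
  proof (induction xs)
    case Nil then show ?case by (simp add: walk_def)
  next
    case (Cons z zs)
    show ?case
    proof (cases zs)
      case Nil then show ?thesis using Cons.prems f0[OF yV] by simp
    next
      case (Cons u us)
      have "z \<in> V" "E z u" "walk V E zs" using Cons.prems(1) walk_Cons2[of V E z u us] Cons by auto
      moreover have "last zs = y" using Cons.prems(2) Cons by simp
      ultimately have "f u y \<le> length zs - 1" using Cons.IH Cons by simp
      moreover have "f z y \<le> f u y + 1" using f1 \<open>E z u\<close> yV by blast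
      ultimately show ?thesis using Cons by simp
    qed
  qed
  show ?thesis unfolding gdist_def
  proof (rule Least_equality)
    show "\<exists>xs. walk V E xs \<and> hd xs = x \<and> last xs = y \<and> length xs = Suc (f x y)"
      using ex xV by blast
  next
    fix n assume "\<exists>xs. walk V E xs \<and> hd xs = x \<and> last xs = y \<and> length xs = Suc n"
    then obtain xs where "walk V E xs" "hd xs = x" "last xs = y" "length xs = Suc n" by blast
    then show "f x y \<le> n" using lb by fastforce
  qed
qed




lemma dim_wt_eqI:
  assumes "wtr_set V E W0" "card W0 = a" "\<And>W. wtr_set V E W \<Longrightarrow> a \<le> card W"
  shows "dim_wt V E = a"
  unfolding dim_wt_def
  by (rule Least_equality) (use assms in auto)

lemma wtr_card_ge2:
  assumes fin: "finite V" and c: "2 \<le> card V" and W: "wtr_set V E W"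
  shows "2 \<le> card W"
proof -
  have WV: "W \<subseteq> V" using W by (simp add: wtr_set_def resolving_set_def)
  hence fW: "finite W" using fin finite_subset by blast
  obtain y z where yz: "y \<in> V" "z \<in> V" "y \<noteq> z"
    using c by (metis card_le_Suc0_iff_eq not_less_eq_eq numeral_2_eq_2 fin)
  then obtain w where w: "w \<in> W" using W unfolding wtr_set_def resolving_set_def by blast
  show ?thesis
  proof (rule ccontr)
    assume "\<not> 2 \<le> card W"
    then have "card W \<le> 1" by simp
    then have Weq: "W = {w}" using w fW using card_le_Suc0_iff_eq[OF fW] by auto
    obtain x where x: "x \<in> V" "x \<noteq> w" using yz by blast
    then show False using W Weq unfolding wtr_set_def by auto
  qed
qed

definition KE :: "nat \<Rightarrow> nat \<Rightarrow> nat \<Rightarrow> bool" where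
  "KE n x y \<longleftrightarrow> x \<noteq> y \<and> x < n \<and> y < n"

lemma K_dist: "x < n \<Longrightarrow> y < n \<Longrightarrow> gdist {..<n} (KE n) x y = (if x = y then 0 else 1)"
  by (rule gdist_eqI[where f="\<lambda>x y. if x = y then 0 else 1"]) (auto simp: KE_def)

lemma K_simple: "simple_graph {..<n} (KE n)"
  by (auto simp: simple_graph_def KE_def)

lemma K_conn: assumes "1 \<le> n" shows "connected_graph {..<n} (KE n)"
  unfolding connected_graph_def
proof (intro conjI ballI)
  show "{..<n} \<noteq> {}" using assms proof -
    have "0 \<in> {..<n}" using assms by simp
    then show ?thesis by blast
  qed
next
  fix x y assume xy: "x \<in> {..<n}" "y \<in> {..<n}"
  show "\<exists>xs. walk {..<n} (KE n) xs \<and> hd xs = x \<and> last xs = y"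
  proof (cases "x = y")
    case True then show ?thesis using xy by (intro exI[of _ "[x]"]) (simp add: walk_single)
  next
    case False then show ?thesis using xy
      by (intro exI[of _ "[x,y]"]) (simp add: walk_Cons2 walk_single KE_def)
  qed
qed

lemma K_dim: assumes "2 \<le> n" shows "dim_wt {..<n} (KE n) = n"
proof (rule dim_wt_eqI)
  show "wtr_set {..<n} (KE n) {..<n}"
    unfolding wtr_set_def resolving_set_def
    by (auto simp: K_dist intro!: bexI)
  show "card {..<n} = n" by simp
next
  fix W assume W: "wtr_set {..<n} (KE n) W"
  have WV: "W \<subseteq> {..<n}" using W by (simp add: wtr_set_def resolving_set_def)
  show "n \<le> card W"
  proof (cases "W = {..<n}")
    case True then show ?thesis by simp
  next
    case False
    then obtain x where x: "x < n" "x \<notin> W" using WV by auto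
    have "W \<noteq> {}"
    proof
      assume "W = {}"
      moreover have "(0::nat) < n" "(1::nat) < n" using assms by auto
      ultimately show False using W unfolding wtr_set_def resolving_set_def
        by (metis empty_iff lessThan_iff zero_neq_one)
    qed
    then obtain w where w: "w \<in> W" by blast
    then obtain w' where w': "w' \<in> W - {w}" "gdist {..<n} (KE n) x w' \<noteq> gdist {..<n} (KE n) w w'"
      using W x unfolding wtr_set_def by auto
    have "w < n" "w' < n" using w w' WV by auto
    then show ?thesis using w' x w by (auto simp: K_dist split: if_splits)
  qed
qed




lemma walk_exI:
  assumes EV: "\<And>x y. E x y \<Longrightarrow> x \<in> V \<and> y \<in> V"
    and f0: "\<And>y. y \<in> V \<Longrightarrow> f y y = (0::nat)"
    and f2: "\<And>x y. x \<in> V \<Longrightarrow> y \<in> V \<Longrightarrow> x \<noteq> y \<Longrightarrow> \<exists>x'. E x x' \<and> f x' y + 1 = f x y"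
    and yV: "y \<in> V"
  shows "\<forall>x\<in>V. f x y = n \<longrightarrow> (\<exists>xs. walk V E xs \<and> hd xs = x \<and> last xs = y \<and> length xs = Suc n)"
  proof (induction n)
    case 0
    show ?case
    proof (intro ballI impI)
      fix x assume x: "x \<in> V" "f x y = 0"
      have "x = y" using f2[OF x(1) yV] x(2) by fastforce
      then show "\<exists>xs. walk V E xs \<and> hd xs = x \<and> last xs = y \<and> length xs = Suc 0"
        by (intro exI[of _ "[x]"]) (use x \<open>x = y\<close> in \<open>simp add: walk_single\<close>)
    qed
  next
    case (Suc n)
    show ?case
    proof (intro ballI impI)
      fix x assume x: "x \<in> V" "f x y = Suc n"
      have "x \<noteq> y" using x f0[OF yV] by auto
      then obtain x' where x': "E x x'" "f x' y + 1 = f x y" using f2[OF x(1) yV] by blast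
      have x'V: "x' \<in> V" using EV[OF x'(1)] by simp
      obtain xs where xs: "walk V E xs" "hd xs = x'" "last xs = y" "length xs = Suc n"
        using Suc.IH x'V x'(2) x(2) by auto
      have xse: "xs = x' # tl xs" using xs(2,4) by (cases xs) auto
      have "walk V E (x # xs)" using xs(1) xse x'(1) x(1) walk_Cons2[of V E x x' "tl xs"] by simp
      then show "\<exists>xs. walk V E xs \<and> hd xs = x \<and> last xs = y \<and> length xs = Suc (Suc n)"
        using xs xse by (intro exI[of _ "x # xs"]) auto
    qed
  qed

definition BE :: "nat \<Rightarrow> nat \<Rightarrow> nat \<Rightarrow> nat \<Rightarrow> bool" where
  "BE L t x y \<longleftrightarrow> (x \<le> L \<and> y \<le> L \<and> (y = Suc x \<or> x = Suc y)) \<or>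
     (x = L \<and> L < y \<and> y \<le> L + t) \<or> (y = L \<and> L < x \<and> x \<le> L + t)"

definition bf :: "nat \<Rightarrow> nat \<Rightarrow> nat \<Rightarrow> nat" where
  "bf L x y = (if x = y then 0 else if L < x \<and> L < y then 2 else
     (min x (Suc L) - min y (Suc L)) + (min y (Suc L) - min x (Suc L)))"

lemma bf_f1: "BE L t x x' \<Longrightarrow> bf L x y \<le> bf L x' y + 1"
  by (auto simp: BE_def bf_def)

lemma bf_f2: assumes "x \<in> {..L + t}" "y \<in> {..L + t}" "x \<noteq> y"
  shows "\<exists>x'. BE L t x x' \<and> bf L x' y + 1 = bf L x y"
proof (cases "L < x")
  case True
  then show ?thesis using assms
    by (intro exI[of _ L]) (auto simp: BE_def bf_def)
next
  case False
  show ?thesis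
  proof (cases "min y (Suc L) < x")
    case True
    then show ?thesis using assms False
      by (intro exI[of _ "x - 1"]) (auto simp: BE_def bf_def)
  next
    case False2: False
    show ?thesis
    proof (cases "x = L")
      case True
      then show ?thesis using assms False False2
        by (intro exI[of _ y]) (auto simp: BE_def bf_def)
    next
      case False3: False
      then show ?thesis using assms False False2
        by (intro exI[of _ "Suc x"]) (auto simp: BE_def bf_def)
    qed
  qed
qed

lemma B_dist: "x \<le> L + t \<Longrightarrow> y \<le> L + t \<Longrightarrow> gdist {..L+t} (BE L t) x y = bf L x y"
  apply (rule gdist_eqI[where f="bf L"])
       apply (unfold BE_def; auto)[1]
      apply (simp add: bf_def)
     apply (erule bf_f1)
    apply (erule (2) bf_f2)
  by simp_all




lemma B_simple: "simple_graph {..L+t} (BE L t)"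
  unfolding simple_graph_def BE_def by auto

lemma B_conn: "connected_graph {..L+t} (BE L t)"
  unfolding connected_graph_def
proof (intro conjI ballI)
  show "{..L+t} \<noteq> {}" by auto
next
  fix x y assume xy: "x \<in> {..L+t}" "y \<in> {..L+t}"
  have "\<forall>x\<in>{..L+t}. bf L x y = n \<longrightarrow> (\<exists>xs. walk {..L+t} (BE L t) xs \<and> hd xs = x \<and> last xs = y \<and> length xs = Suc n)" for n
    apply (rule walk_exI[where f="bf L"])
       apply (unfold BE_def; auto)[1]
      apply (simp add: bf_def)
     apply (erule (2) bf_f2)
    using xy by simp
  then show "\<exists>xs. walk {..L+t} (BE L t) xs \<and> hd xs = x \<and> last xs = y" using xy by blast
qed

abbreviation "W0 L t \<equiv> insert 0 {L<..L+t}"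

lemma bf_0: "bf L y 0 = min y (Suc L)"
  by (cases "y = 0") (auto simp: bf_def)

lemma bf_SL: "x \<le> L \<Longrightarrow> bf L x (Suc L) = Suc L - x"
  by (auto simp: bf_def min_def)

lemma B_wtr: assumes "1 \<le> L" "1 \<le> t" shows "wtr_set {..L+t} (BE L t) (W0 L t)"
  unfolding wtr_set_def resolving_set_def
proof (intro conjI ballI impI)
  show "W0 L t \<subseteq> {..L+t}" by auto
next
  fix y z assume yz: "y \<in> {..L+t}" "z \<in> {..L+t}" "y \<noteq> z"
  show "\<exists>x\<in>W0 L t. gdist {..L+t} (BE L t) y x \<noteq> gdist {..L+t} (BE L t) z x"
  proof (cases "L < y \<and> L < z")
    case True
    then have "bf L y y \<noteq> bf L z y" using yz by (simp add: bf_def)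
    then show ?thesis using yz True by (intro bexI[of _ y]) (simp_all add: B_dist)
  next
    case False
    then have "min y (Suc L) \<noteq> min z (Suc L)" using yz by (auto simp: min_def)
    then have "bf L y 0 \<noteq> bf L z 0" by (simp add: bf_0)
    then show ?thesis using yz by (intro bexI[of _ 0]) (simp_all add: B_dist)
  qed
next
  fix w x assume w: "w \<in> W0 L t" and x: "x \<in> {..L+t} - W0 L t"
  have x1: "1 \<le> x" "x \<le> L" using x by auto
  show "\<exists>w'\<in>W0 L t - {w}. gdist {..L+t} (BE L t) x w' \<noteq> gdist {..L+t} (BE L t) w w'"
  proof (cases "w = 0")
    case True
    have "bf L x (Suc L) \<noteq> bf L 0 (Suc L)" using x1 by (simp add: bf_SL)
    then show ?thesis using x1 True assms
      by (intro bexI[of _ "Suc L"]) (simp_all add: B_dist)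
  next
    case False
    then have wl: "L < w" "w \<le> L + t" using w by auto
    have "bf L x 0 \<noteq> bf L w 0" using x1 wl by (simp add: bf_0 min_def)
    then show ?thesis using x1 wl False
      by (intro bexI[of _ 0]) (simp_all add: B_dist)
  qed
qed

lemma B_card: "card (W0 L t) = Suc t"
  by simp

lemma bf_twin: assumes "L < y" "L < y'" "w \<noteq> y" "w \<noteq> y'"
  shows "bf L y w = bf L y' w"
proof (cases "L < w")
  case True then show ?thesis using assms by (simp add: bf_def)
next
  case False
  then have "min y (Suc L) = Suc L" "min y' (Suc L) = Suc L" "min w (Suc L) = w" using assms by auto
  then show ?thesis using assms False unfolding bf_def by simp
qed

lemma bf_L1: assumes "1 \<le> L" "L < w" "w \<noteq> Suc L" shows "bf L (L - 1) w = bf L (Suc L) w"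
proof -
  have "min (L - 1) (Suc L) = L - 1" "min w (Suc L) = Suc L" using assms by auto
  then show ?thesis using assms unfolding bf_def by simp
qed

lemma B_lower:
  assumes L: "1 \<le> L" and t: "2 \<le> t" and W: "wtr_set {..L+t} (BE L t) W"
  shows "Suc t \<le> card W"
proof -
  have WV: "W \<subseteq> {..L+t}" using W by (simp add: wtr_set_def resolving_set_def)
  have fW: "finite W" using WV finite_subset by blast
  have wt: "\<And>w x. w \<in> W \<Longrightarrow> x \<in> {..L+t} - W \<Longrightarrow> \<exists>w'\<in>W-{w}. gdist {..L+t} (BE L t) x w' \<noteq> gdist {..L+t} (BE L t) w w'"
    using W unfolding wtr_set_def by blast
  have rs: "\<And>y z. y \<in> {..L+t} \<Longrightarrow> z \<in> {..L+t} \<Longrightarrow> y \<noteq> z \<Longrightarrow> \<exists>x\<in>W. gdist {..L+t} (BE L t) y x \<noteq> gdist {..L+t} (BE L t) z x"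
    using W unfolding wtr_set_def resolving_set_def by blast
  have T: "{L<..L+t} \<subseteq> W"
  proof
    fix y assume y: "y \<in> {L<..L+t}"
    show "y \<in> W"
    proof (rule ccontr)
      assume yW: "y \<notin> W"
      obtain y' where y': "y' \<in> {L<..L+t}" "y' \<noteq> y"
      proof (cases "y = Suc L")
        case True
        have "Suc (Suc L) \<in> {L<..L+t}" "Suc (Suc L) \<noteq> y" using True t by auto
        then show ?thesis by (rule that)
      next
        case False
        have "Suc L \<in> {L<..L+t}" "Suc L \<noteq> y" using False t by auto
        then show ?thesis by (rule that)
      qed
      show False
      proof (cases "y' \<in> W")
        case True
        have "y \<in> {..L+t} - W" using y yW by auto
        then obtain w' where w': "w' \<in> W - {y'}" "gdist {..L+t} (BE L t) y w' \<noteq> gdist {..L+t} (BE L t) y' w'"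
          using wt[OF True] by blast
        have "w' \<le> L + t" "w' \<noteq> y" "w' \<noteq> y'" using w' WV yW by auto
        moreover have "y \<le> L + t" "y' \<le> L+t" "L < y" "L < y'" using y y' by auto
        ultimately show False using w'(2) bf_twin[of L y y' w'] by (simp add: B_dist)
      next
        case False
        have "y \<in> {..L+t}" "y' \<in> {..L+t}" using y y' by auto
        then obtain x where x: "x \<in> W" "gdist {..L+t} (BE L t) y x \<noteq> gdist {..L+t} (BE L t) y' x"
          using rs y' by blast
        have "x \<le> L + t" "x \<noteq> y" "x \<noteq> y'" using x WV yW False by auto
        moreover have "y \<le> L + t" "y' \<le> L+t" "L < y" "L < y'" using y y' by auto
        ultimately show False using x(2) bf_twin[of L y y' x] by (simp add: B_dist)
      qed
    qed
  qed
  have "W \<noteq> {L<..L+t}"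
  proof
    assume Weq: "W = {L<..L+t}"
    have "Suc L \<in> W" "L - 1 \<in> {..L+t} - W" using Weq t by auto
    then obtain w' where w': "w' \<in> W - {Suc L}" "gdist {..L+t} (BE L t) (L - 1) w' \<noteq> gdist {..L+t} (BE L t) (Suc L) w'"
      using wt by blast
    moreover have "w' \<le> L + t" "L < w'" "w' \<noteq> Suc L" using w' Weq by auto
    ultimately show False using L bf_L1[of L w'] by (simp add: B_dist)
  qed
  then have "{L<..L+t} \<subset> W" using T by blast
  then have "card {L<..L+t} < card W" using fW psubset_card_mono by blast
  then show ?thesis by simp
qed

lemma B_dim: assumes "1 \<le> L" "1 \<le> t" shows "dim_wt {..L+t} (BE L t) = Suc t"
proof (rule dim_wt_eqI[OF B_wtr[OF assms] B_card])
  fix W assume W: "wtr_set {..L+t} (BE L t) W"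
  show "Suc t \<le> card W"
  proof (cases "t = 1")
    case True
    have "2 \<le> card W" by (rule wtr_card_ge2[OF _ _ W]) (use assms in auto)
    then show ?thesis using True by simp
  next
    case False
    then show ?thesis using B_lower[OF assms(1) _ W] assms by simp
  qed
qed

theorem theorem13:
  fixes a b :: nat
  assumes "2 \<le> a" and "a \<le> b"
  shows "\<exists>(V :: nat set) E. simple_graph V E \<and> connected_graph V E \<and>
           card V = b \<and> dim_wt V E = a"
proof (cases "a = b")
  case True
  have "2 \<le> b" using assms by simp
  then have "simple_graph {..<b} (KE b) \<and> connected_graph {..<b} (KE b) \<and> card {..<b} = b \<and> dim_wt {..<b} (KE b) = a"
    using True K_simple K_conn K_dim by simp
  then show ?thesis by blast
next
  case False
  define L where "L = b - a"
  define t where "t = a - 1"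
  have Lt: "1 \<le> L" "1 \<le> t" "b = Suc (L + t)" "a = Suc t" using assms False by (auto simp: L_def t_def)
  have "simple_graph {..L+t} (BE L t) \<and> connected_graph {..L+t} (BE L t) \<and> card {..L+t} = b \<and> dim_wt {..L+t} (BE L t) = a"
    using B_simple B_conn B_dim[OF Lt(1,2)] Lt(3,4) by simp
  then show ?thesis by blast
qed


end
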